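(* Let $f(z)=e^z$ and $U=\mathbb{C}\setminus[0,\infty)$. Then $\|\mathrm{D} f(\zeta)\|_U^U>1$ for all $\zeta\in f^{-1}(U)$. Moreover, if $(\zeta_n)$ is a sequence in $f^{-1}(U)$ with $\|\mathrm{D} f(\zeta_n)\|_U^U\to 1$ as $n\to\infty$, then $\min\bigl(|\zeta_n|,\mathrm{Arg}(\zeta_n)\bigr)\to 0$ as $n\to\infty$.
   Context: The hyperbolic metric on $U=\mathbb{C}\setminus[0,\infty)$ has density $\rho_U(z)=\dfrac{1}{2|z|\sin(\arg(z)/2)}$, where $\arg(z)\in(0,2\pi)$. For $\zeta\in f^{-1}(U)$ the hyperbolic derivative is $\|\mathrm{D} f(\zeta)\|_U^U = |f'(\zeta)|\cdot \rho_U(f(\zeta))/\rho_U(\zeta)$. $\mathrm{Arg}(z)\in(-\pi,\pi]$ denotes the principal argument. *)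

theory Defs
  imports "HOL-Analysis.Analysis"
begin

definition slitU :: "complex set" where
  "slitU = - (complex_of_real ` {0..})"

text \<open>Hyperbolic density of U; arg(z) in (0, 2 pi) is Arg2pi z (which lies in [0,2pi),
  and in (0,2pi) for z in U).\<close>
definition rhoU :: "complex \<Rightarrow> real" where
  "rhoU z = 1 / (2 * cmod z * sin (Arg2pi z / 2))"

definition hypDexp :: "complex \<Rightarrow> real" where
  "hypDexp \<zeta> = cmod (deriv exp \<zeta>) * rhoU (exp \<zeta>) / rhoU \<zeta>"

end

theory Submission
  imports Defs
begin

lemma slit_char: "w \<in> slitU \<longleftrightarrow> \<not>(Im w = 0 \<and> Re w \<ge> 0)"
proof -
  have "w \<in> complex_of_real ` {0..} \<longleftrightarrow> (Im w = 0 \<and> Re w \<ge> 0)"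
  proof
    assume "w \<in> complex_of_real ` {0..}"
    then obtain t where "t \<ge> 0" "w = complex_of_real t" by auto
    then show "Im w = 0 \<and> Re w \<ge> 0" by simp
  next
    assume h: "Im w = 0 \<and> Re w \<ge> 0"
    then have "w = complex_of_real (Re w)" by (simp add: complex_eq_iff)
    then show "w \<in> complex_of_real ` {0..}" using h by (metis atLeast_iff imageI)
  qed
  then show ?thesis unfolding slitU_def by simp
qed

lemma rho_sq:
  assumes "w \<in> slitU"
  shows "rhoU w > 0" "(rhoU w)^2 * (2*cmod w*(cmod w - Re w)) = 1"
proof -
  define th where "th = Arg2pi w"
  have w0: "w \<noteq> 0" using assms slit_char by auto
  have th0: "th \<noteq> 0" using assms slit_char Arg2pi_eq_0[of w] complex_is_Real_iff th_def by auto
  have "0 \<le> th" "th < 2*pi" using Arg2pi th_def by auto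
  then have s: "sin (th/2) > 0" using th0 by (intro sin_gt_zero) auto
  have c: "cmod w * cos th = Re w" using cos_Arg2pi th_def by simp
  have cd: "cos th = 1 - 2 * sin (th/2)^2" using cos_double_sin[of "th/2"] by simp
  have n: "cmod w > 0" using w0 by simp
  show "rhoU w > 0" unfolding rhoU_def th_def[symmetric] using s n by simp
  have "2*cmod w*(cmod w - Re w) = 4 * cmod w ^2 * sin (th/2)^2"
    unfolding c[symmetric] cd by (simp add: algebra_simps power2_eq_square)
  then show "(rhoU w)^2 * (2*cmod w*(cmod w - Re w)) = 1"
    unfolding rhoU_def th_def[symmetric] using s n by (simp add: field_simps power2_eq_square)
qed

lemma slit_exp: "exp z \<in> slitU \<Longrightarrow> z \<in> slitU"
  using slit_char[of z] slit_char[of "exp z"] by (auto simp: Re_exp Im_exp)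

lemma key:
  assumes "exp z \<in> slitU"
  defines "x \<equiv> Re z" and "y \<equiv> Im z" and "r \<equiv> cmod z"
  shows "hypDexp z > 0" "1 - cos y > 0" "(hypDexp z)^2 * (1 - cos y) = r*(r-x)"
proof -
  have zs: "z \<in> slitU" using slit_exp assms by blast
  note rz = rho_sq[OF zs] and rw = rho_sq[OF assms(1)]
  have de: "deriv exp z = exp z" by (rule DERIV_imp_deriv) (rule DERIV_exp)
  have ne: "cmod (exp z) = exp x" by (simp add: x_def norm_exp_eq_Re)
  have re: "Re (exp z) = exp x * cos y" by (simp add: x_def y_def Re_exp)
  have B: "1 - cos y > 0"
  proof -
    have "cmod (exp z) - Re (exp z) \<noteq> 0" using rw(2) by auto
    then have "cos y \<noteq> 1" using ne re by auto
    then show ?thesis using cos_le_one[of y] by linarith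
  qed
  show "1 - cos y > 0" by fact
  show "hypDexp z > 0" unfolding hypDexp_def de using rz(1) rw(1) by simp
  have w2: "(rhoU (exp z))^2 = 1 / (2 * exp x ^2 * (1 - cos y))"
    using rw(2) B unfolding ne re by (simp add: field_simps power2_eq_square)
  have pos: "2 * r * (r - x) \<noteq> 0" using rz(2) unfolding r_def x_def by auto
  have z2: "(rhoU z)^2 = 1 / (2 * r * (r - x))"
    using rz(2) pos unfolding r_def x_def by (simp add: eq_divide_eq)
  have "(hypDexp z)^2 = exp x ^2 * (rhoU (exp z))^2 / (rhoU z)^2"
    unfolding hypDexp_def de ne by (simp add: power_divide power_mult_distrib)
  also have "\<dots> = r*(r-x) / (1 - cos y)"
    unfolding w2 z2 using B pos by (simp add: field_simps power2_eq_square)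
  finally show "(hypDexp z)^2 * (1 - cos y) = r*(r-x)" using B by simp
qed


lemma pt:
  assumes "exp z \<in> slitU"
  defines "x \<equiv> Re z" and "y \<equiv> Im z" and "r \<equiv> cmod z"
  shows "hypDexp z > 1" "r > 0" "r + x > 0" "2*r/(r+x) \<le> (hypDexp z)^2"
    "1 \<le> 2*r/(r+x)" "(y/r)^2 = 1 - (x/r)^2"
proof -
  note k = key[OF assms(1)]
  have k3: "(hypDexp z)^2 * (1 - cos y) = r*(r-x)" using k(3) unfolding x_def y_def r_def .
  have B: "1 - cos y > 0" using k(2) unfolding y_def .
  have y0: "y \<noteq> 0" using B by auto
  have Bl: "1 - cos y \<le> y^2/2"
  proof -
    have "\<bar>sin (y/2)\<bar> \<le> \<bar>y/2\<bar>" by (rule abs_sin_x_le_abs_x)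
    then have "sin (y/2)^2 \<le> (y/2)^2" by (metis abs_le_square_iff)
    moreover have "cos y = 1 - 2 * sin (y/2)^2" using cos_double_sin[of "y/2"] by simp
    ultimately show ?thesis by (simp add: power_divide)
  qed
  have r2: "r^2 = x^2 + y^2" unfolding r_def x_def y_def by (simp add: cmod_power2)
  have rnn: "r \<ge> 0" unfolding r_def by simp
  have "x^2 < r^2" using r2 y0 by simp
  then have rx: "\<bar>x\<bar> < r" using rnn by (metis abs_ge_zero abs_of_nonneg power2_abs power_less_imp_less_base)
  show rp: "r > 0" using rx by linarith
  show rpx: "r + x > 0" using rx by linarith
  have A: "2 * (r*(r-x)) - y^2 = (r-x)^2" using r2 by (simp add: algebra_simps power2_eq_square)
  have Apos: "(r-x)^2 > 0" using rx by simp
  have H0: "hypDexp z > 0" using k(1) .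
  have "(hypDexp z)^2 * (1 - cos y) > 1 - cos y" using k3 A Apos Bl by linarith
  then have "(hypDexp z)^2 > 1" using B by simp
  then show "hypDexp z > 1" using H0 by (metis abs_of_pos one_less_power power2_less_imp_less less_imp_le zero_le_one power_one)
  have y2: "y^2 = (r-x)*(r+x)" using r2 by (simp add: algebra_simps power2_eq_square)
  have "r*(r-x) \<le> (hypDexp z)^2 * (y^2/2)"
    using k3 Bl by (metis mult_left_mono zero_le_power2)
  then have "2*r*(r-x) \<le> (hypDexp z)^2 * ((r-x)*(r+x))" using y2 by simp
  then have "2*r*(r-x) \<le> ((hypDexp z)^2 * (r+x))*(r-x)" by (simp add: algebra_simps)
  then have "2*r \<le> (hypDexp z)^2 * (r+x)" using rx by (simp add: mult_le_cancel_right)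
  then show "2*r/(r+x) \<le> (hypDexp z)^2" using rpx by (simp add: divide_le_eq)
  show "1 \<le> 2*r/(r+x)" using rpx rx by (simp add: le_divide_eq)
  have "(y/r)^2 + (x/r)^2 = (y^2+x^2)/r^2" by (simp add: power_divide add_divide_distrib)
  also have "\<dots> = r^2/r^2" using r2 by (simp add: add.commute)
  also have "\<dots> = 1" using rp by simp
  finally show "(y/r)^2 = 1 - (x/r)^2" by simp
qed

theorem mainTheorem4:
  shows "(\<forall>\<zeta>. exp \<zeta> \<in> slitU \<longrightarrow> hypDexp \<zeta> > 1)
    \<and> (\<forall>\<zeta> :: nat \<Rightarrow> complex. (\<forall>n. exp (\<zeta> n) \<in> slitU) \<longrightarrow>
          (\<lambda>n. hypDexp (\<zeta> n)) \<longlonglongrightarrow> 1 \<longrightarrow>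
          (\<lambda>n. min (cmod (\<zeta> n)) (Arg (\<zeta> n))) \<longlonglongrightarrow> 0)"
proof (intro conjI allI impI)
  fix z :: complex assume "exp z \<in> slitU" then show "hypDexp z > 1" by (rule pt(1))
next
  fix z :: "nat \<Rightarrow> complex"
  assume U: "\<forall>n. exp (z n) \<in> slitU" and H: "(\<lambda>n. hypDexp (z n)) \<longlonglongrightarrow> 1"
  define r where "r n = cmod (z n)" for n
  define x where "x n = Re (z n)" for n
  define q where "q n = 2 * r n / (r n + x n)" for n
  define c where "c n = x n / r n" for n
  note P = pt[OF U[rule_format]]
  have H2: "(\<lambda>n. (hypDexp (z n))^2) \<longlonglongrightarrow> 1" using tendsto_power[OF H, of 2] by simp
  have q1: "q \<longlonglongrightarrow> 1"
    by (rule tendsto_sandwich[OF _ _ tendsto_const H2]) (use P in \<open>auto simp: q_def r_def x_def\<close>)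
  have cq: "c n = 2 / q n - 1" for n
    using P(2)[of n] P(3)[of n] unfolding c_def q_def r_def x_def by (simp add: field_simps)
  have "(\<lambda>n. 2 / q n - 1) \<longlonglongrightarrow> 2 / 1 - 1" by (intro tendsto_intros q1) auto
  then have c1: "c \<longlonglongrightarrow> 1" unfolding cq by simp
  define u where "u n = z n / of_real (r n)" for n
  have reu: "Re (u n) = c n" for n unfolding u_def c_def x_def by simp
  have imu: "\<bar>Im (u n)\<bar> = sqrt (1 - (c n)^2)" for n
  proof -
    have "Im (u n) = Im (z n) / r n" unfolding u_def by simp
    then have "(Im (u n))^2 = 1 - (c n)^2" using P(6)[of n] unfolding c_def x_def r_def by simp
    then show ?thesis by (metis real_sqrt_abs)
  qed
  have "(\<lambda>n. sqrt (1 - (c n)^2)) \<longlonglongrightarrow> sqrt (1 - 1^2)"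
    by (intro tendsto_intros c1)
  then have "(\<lambda>n. \<bar>Im (u n)\<bar>) \<longlonglongrightarrow> 0" unfolding imu by simp
  then have "(\<lambda>n. Im (u n)) \<longlonglongrightarrow> 0" by (rule tendsto_rabs_zero_cancel)
  then have "u \<longlonglongrightarrow> 1" unfolding tendsto_complex_iff reu using c1 by simp
  then have t: "(\<lambda>n. Arg (u n)) \<longlonglongrightarrow> Arg 1" by (rule tendsto_Arg) simp
  have eq: "(\<lambda>n. Arg (u n)) = (\<lambda>n. Arg (z n))"
  proof
    fix n show "Arg (u n) = Arg (z n)" unfolding u_def r_def using P(2)[of n] by (simp only: Arg_divide_of_real)
  qed
  have A: "(\<lambda>n. Arg (z n)) \<longlonglongrightarrow> 0" using t unfolding eq Arg_1 .
  show "(\<lambda>n. min (cmod (z n)) (Arg (z n))) \<longlonglongrightarrow> 0"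
  proof (rule Lim_null_comparison[OF _ tendsto_rabs_zero[OF A]])
    show "\<forall>\<^sub>F n in sequentially. norm (min (cmod (z n)) (Arg (z n))) \<le> \<bar>Arg (z n)\<bar>"
    proof (intro always_eventually allI)
      fix n
      have "cmod (z n) \<ge> 0" by simp
      then show "norm (min (cmod (z n)) (Arg (z n))) \<le> \<bar>Arg (z n)\<bar>"
        unfolding real_norm_def by linarith
    qed
  qed
qed

end
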